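(* Let $t$ be an odd positive integer. Then for every integer $n\ge0$, $$b^{3}_{2,3t}(3n+2)\equiv 0\pmod 6.$$
   Context: For integers $r\ge1$ write $f_r=\prod_{i\ge1}(1-q^{ri})$. For coprime positive integers $\ell,m$ and a positive integer $k$, $b^{k}_{\ell,m}(n)$ denotes the number of $k$-colored partitions of $n$ into parts not divisible by $\ell$ or by $m$, i.e. $\sum_{n\ge0} b^{k}_{\ell,m}(n)q^n=\dfrac{f_\ell^k f_m^k}{f_1^k f_{\ell m}^k}$. Thus $\sum b^3_{2,3t}(n)q^n=\dfrac{f_2^3f_{3t}^3}{f_1^3f_{6t}^3}$. *)

theory Defs
  imports "HOL-Computational_Algebra.Formal_Power_Series"
begin

text \<open>Truncation of f_r = prod_{i>=1} (1 - q^(r i)) to the factors with i <= N.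
  For r >= 1 and N >= n, this agrees with f_r modulo q^(n+1).\<close>
definition eta_trunc :: "nat \<Rightarrow> nat \<Rightarrow> rat fps" where
  "eta_trunc r N = (\<Prod>i\<in>{1..N}. 1 - fps_X ^ (r * i))"

text \<open>b^k_{l,m}(n) = coefficient of q^n in f_l^k f_m^k / (f_1^k f_{lm}^k);
  truncating each product at N = n does not change the n-th coefficient.\<close>
definition b_col :: "nat \<Rightarrow> nat \<Rightarrow> nat \<Rightarrow> nat \<Rightarrow> rat" where
  "b_col k l m n =
     fps_nth ((eta_trunc l n ^ k * eta_trunc m n ^ k) /
              (eta_trunc 1 n ^ k * eta_trunc (l * m) n ^ k)) n"

end

theory Submission
  imports Defs "HOL-Computational_Algebra.Polynomial"
begin
unbundle fps_syntax

abbreviation X :: "rat fps" where "X \<equiv> fps_X"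

definition P :: "nat \<Rightarrow> rat fps" where "P k = (\<Prod>i\<in>{1..k}. 1 - X ^ i)"

lemma P_0[simp]: "P 0 = 1" by (simp add: P_def)
lemma P_Suc: "P (Suc k) = P k * (1 - X ^ Suc k)"
  by (simp add: P_def prod.cl_ivl_Suc)
lemma P_nth0[simp]: "P k $ 0 = 1"
  by (induction k) (simp_all add: P_Suc)
lemma P_nz: "P k \<noteq> 0"
  using P_nth0[of k] by (metis fps_zero_nth zero_neq_one)
lemma eta1: "eta_trunc 1 k = P k" by (simp add: eta_trunc_def P_def)

fun G :: "nat \<Rightarrow> nat \<Rightarrow> rat fps" where
  "G 0 j = (if j = 0 then 1 else 0)"
| "G (Suc M) j = (if j = 0 then 1 else G M j + X ^ (M + 1 - j) * G M (j - 1))"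

lemma G_0[simp]: "G M 0 = 1" by (cases M) auto

lemma G_zero: "j > M \<Longrightarrow> G M j = 0"
  by (induction M arbitrary: j) auto

lemma G_prod: "j \<le> M \<Longrightarrow> G M j * P j * P (M - j) = P M"
proof (induction M arbitrary: j)
  case 0 then show ?case by simp
next
  case (Suc M j)
  show ?case
  proof (cases j)
    case 0 then show ?thesis by simp
  next
    case (Suc j')
    show ?thesis
    proof (cases "j' = M")
      case True
      have gm: "G M M * P M = P M" using Suc.IH[of M] by simp
      have "G (Suc M) j = G M M" using True Suc by (simp add: G_zero)
      hence "G (Suc M) j * P j * P (Suc M - j) = (G M M * P M) * (1 - X ^ Suc M)"
        using True Suc by (simp add: P_Suc algebra_simps)
      then show ?thesis using gm by (simp add: P_Suc)
    next
      case False
      hence lt: "j' < M" using Suc Suc.prems by simp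
      have h1: "G M (Suc j') * P (Suc j') * P (M - Suc j') = P M" using Suc.IH[of "Suc j'"] lt by simp
      have h2: "G M j' * P j' * P (M - j') = P M" using Suc.IH[of j'] lt by simp
      have e1: "M - j' = Suc (M - Suc j')" using lt by simp
      have e2: "M + 1 - Suc j' = M - j'" by simp
      have "G (Suc M) j * P j * P (Suc M - j)
          = (G M (Suc j') + X ^ (M - j') * G M j') * (P j' * (1 - X ^ Suc j')) * P (M - j')"
        using Suc by (simp add: P_Suc)
      also have "\<dots> = G M (Suc j') * P (Suc j') * P (M - Suc j') * (1 - X ^ (M - j'))
                 + X ^ (M - j') * (G M j' * P j' * P (M - j')) * (1 - X ^ Suc j')"
        by (simp add: e1 P_Suc algebra_simps)
      also have "\<dots> = P M * (1 - X ^ (M - j')) + X ^ (M - j') * P M * (1 - X ^ Suc j')"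
        using h1 h2 by simp
      also have "\<dots> = P M * (1 - X ^ Suc M)"
      proof -
        have "X ^ (M - j') * X ^ Suc j' = (X ^ Suc M :: rat fps)"
          using lt by (simp add: power_add[symmetric])
        then show ?thesis by (simp add: algebra_simps)
      qed
      finally show ?thesis by (simp add: P_Suc)
    qed
  qed
qed

lemma P_shift: "\<exists>R. P (b + c) = P b * R \<and> X ^ Suc b dvd R - 1"
proof (induction c)
  case 0 then show ?case by (intro exI[of _ 1]) simp
next
  case (Suc c)
  then obtain R where R: "P (b + c) = P b * R" "X ^ Suc b dvd R - 1" by blast
  have d: "X ^ Suc b dvd X ^ Suc (b + c)" by (simp add: le_imp_power_dvd)
  have "R * (1 - X ^ Suc (b + c)) - 1 = (R - 1) - X ^ Suc (b + c) * R" by (simp add: algebra_simps)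
  moreover have "X ^ Suc b dvd (R - 1) - X ^ Suc (b + c) * R"
    using R(2) d by (simp add: dvd_diff dvd_mult2)
  ultimately show ?case using R(1)
    by (intro exI[of _ "R * (1 - X ^ Suc (b + c))"]) (simp add: P_Suc algebra_simps)
qed

lemma G_near1:
  assumes "G M j * P a * P b = P M" "a + b = M" "a \<le> N" "N \<le> b"
  shows "X ^ Suc a dvd G M j * P N - 1"
proof -
  obtain R1 where R1: "P (b + a) = P b * R1" "X ^ Suc b dvd R1 - 1" using P_shift by blast
  obtain R2 where R2: "P (a + (N - a)) = P a * R2" "X ^ Suc a dvd R2 - 1" using P_shift by blast
  have PN: "P N = P a * R2" using R2(1) assms(3) by simp
  have "P b * (G M j * P N) = P b * (R1 * R2)"
  proof -
    have "P b * (G M j * P N) = (G M j * P a * P b) * R2" by (simp add: PN algebra_simps)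
    also have "\<dots> = P (b + a) * R2" using assms by (simp add: add.commute)
    finally show ?thesis using R1(1) by (simp add: algebra_simps)
  qed
  hence eq: "G M j * P N = R1 * R2" using P_nz[of b] by simp
  have d1: "X ^ Suc a dvd R1 - 1"
    using R1(2) assms(3,4) by (meson dvd_trans le_imp_power_dvd Suc_le_mono le_trans)
  have e: "R1 * R2 - 1 = (R1 - 1) * R2 + (R2 - 1)" by (simp add: algebra_simps)
  have "X ^ Suc a dvd (R1 - 1) * R2 + (R2 - 1)" using d1 R2(2) by (intro dvd_add dvd_mult2)
  then show ?thesis unfolding eq e .
qed

definition ch :: "nat \<Rightarrow> nat" where "ch j = (\<Sum>i<j. i)"
lemma ch_Suc: "ch (Suc j) = ch j + j" by (simp add: ch_def)
lemma ch_0[simp]: "ch 0 = 0" by (simp add: ch_def)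

lemma pmult_lin: "p * [:a, b:] = smult a p + pCons 0 (smult b p)"
  by simp

lemma qbin: "coeff (\<Prod>i<M. [:a, X ^ i:]) j = G M j * X ^ ch j * a ^ (M - j)"
proof (induction M arbitrary: j)
  case 0 then show ?case by (simp add: coeff_1)
next
  case (Suc M j)
  have pe: "(\<Prod>i<Suc M. [:a, X ^ i:]) = (\<Prod>i<M. [:a, X ^ i:]) * [:a, X ^ M:]" by simp
  show ?case
  proof (cases j)
    case 0 then show ?thesis unfolding pe pmult_lin using Suc.IH[of 0] by simp
  next
    case (Suc k)
    have c: "coeff (\<Prod>i<Suc M. [:a, X ^ i:]) j
        = a * (G M (Suc k) * X ^ ch (Suc k) * a ^ (M - Suc k)) + X ^ M * (G M k * X ^ ch k * a ^ (M - k))"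
      unfolding pe pmult_lin using Suc Suc.IH by simp
    consider "k < M" | "k = M" | "k > M" by linarith
    then show ?thesis
    proof cases
      case 1
      have e1: "a * a ^ (M - Suc k) = a ^ (M - k)" using 1
        by (metis Suc_diff_Suc power_Suc)
      have e2: "X ^ M * X ^ ch k = X ^ (M - k) * (X ^ ch (Suc k) :: rat fps)"
        using 1 by (simp add: ch_Suc power_add[symmetric])
      have "coeff (\<Prod>i<Suc M. [:a, X ^ i:]) j
          = G M (Suc k) * X ^ ch (Suc k) * (a * a ^ (M - Suc k)) + G M k * (X ^ M * X ^ ch k) * a ^ (M - k)"
        unfolding c by (simp add: algebra_simps)
      also have "\<dots> = (G M (Suc k) + X ^ (M - k) * G M k) * X ^ ch (Suc k) * a ^ (M - k)"
        unfolding e1 e2 by (simp add: algebra_simps)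
      finally show ?thesis using Suc by simp
    next
      case 2
      have "coeff (\<Prod>i<Suc M. [:a, X ^ i:]) j = G M M * X ^ (ch M + M)"
        unfolding c using 2 by (simp add: G_zero power_add algebra_simps)
      then show ?thesis using 2 Suc by (simp add: G_zero ch_Suc)
    next
      case 3
      then show ?thesis unfolding c using Suc by (simp add: G_zero)
    qed
  qed
qed

lemma ch_add: "ch (a + b) = ch a + ch b + a * b"
proof (induction b)
  case (Suc b) then show ?case by (simp add: ch_Suc)
qed simp
lemma ch_double: "2 * ch k + k = k * k"
proof (induction k)
  case (Suc k) then show ?case by (simp add: ch_Suc)
qed simp
lemma ch_ge: "k \<le> ch k + 1"
  by (induction k) (simp_all add: ch_Suc)
lemma ch_mod: "ch k mod 3 \<noteq> 2"
proof (induction k rule: less_induct)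
  case (less k)
  show ?case
  proof (cases "k < 3")
    case True
    then have "k = 0 \<or> k = 1 \<or> k = 2" by auto
    then show ?thesis by (auto simp: ch_Suc numeral_2_eq_2)
  next
    case False
    then obtain r where r: "k = r + 3" by (metis add.commute le_Suc_ex not_less)
    have c3: "ch 3 = 3" by (simp add: ch_Suc numeral_3_eq_3)
    have "ch k = ch r + 3 * (r + 1)" unfolding r ch_add c3 by simp
    then have "ch k mod 3 = ch r mod 3" by presburger
    then show ?thesis using less.IH[of r] r by simp
  qed
qed

lemma E_lt: "j < N \<Longrightarrow> ch (Suc j) + N * (2 * N + 1 - Suc j) = N + ch N + N * N + ch (N - j)"
proof -
  assume "j < N"
  then obtain r where r: "N = Suc j + r" by (metis less_imp_Suc_add add_Suc)
  have a: "2 * N + 1 - Suc j = N + Suc r" using r by simp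
  have b: "N - j = Suc r" using r by simp
  have c: "2 * ch r + r = r * r" by (rule ch_double)
  have chN: "ch N = ch (Suc j) + ch r + Suc j * r" unfolding r by (rule ch_add)
  have chS: "ch (Suc r) = ch r + r" by (rule ch_Suc)
  have key: "\<And>A C. 2 * C + r = r * r \<Longrightarrow> A + (Suc j + r) * ((Suc j + r) + Suc r)
     = (Suc j + r) + (A + C + Suc j * r) + (Suc j + r) * (Suc j + r) + (C + r)"
    by (simp add: algebra_simps)
  show ?thesis unfolding a b chN chS using key[OF c, of "ch (Suc j)"] r by simp
qed

lemma E_ge: "N \<le> j \<Longrightarrow> j \<le> 2 * N \<Longrightarrow>
    ch (Suc j) + N * (2 * N + 1 - Suc j) = N + ch N + N * N + ch (j - N + 1)"
proof -
  assume h: "N \<le> j" "j \<le> 2 * N"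
  then obtain s where s: "j = N + s" by (metis le_Suc_ex)
  obtain u where u: "N = s + u" using h s by (metis le_Suc_ex add_le_cancel_left mult_2)
  have a: "2 * N + 1 - Suc j = u" using s u by simp
  have b: "j - N + 1 = Suc s" using s by simp
  have sj: "Suc j = N + Suc s" using s by simp
  have chj: "ch (Suc j) = ch N + ch (Suc s) + N * Suc s" unfolding sj by (rule ch_add)
  have key: "N * Suc s + N * u = N + N * N" using u by (simp add: algebra_simps)
  show ?thesis unfolding a b chj using key by simp
qed

definition PiP :: "nat \<Rightarrow> rat fps poly" where "PiP N = (\<Prod>i<2*N+1. [:X^N, X^i:])"

lemma poly_le_sum:
  fixes p :: "rat fps poly"
  assumes "degree p \<le> n" shows "poly p x = (\<Sum>i\<le>n. coeff p i * x ^ i)"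
proof -
  have "poly p x = poly (\<Sum>i\<le>n. monom (coeff p i) i) x"
    by (simp only: poly_as_sum_of_monoms'[OF assms])
  also have "\<dots> = (\<Sum>i\<le>n. coeff p i * x ^ i)" unfolding poly_sum by (rule sum.cong) (auto simp: poly_monom)
  finally show ?thesis .
qed

lemma coeff_Pi: "coeff (PiP N) j = G (2*N+1) j * X ^ ch j * X ^ (N * (2*N+1 - j))"
  unfolding PiP_def qbin by (simp add: power_mult)

lemma deriv_sum: "poly (pderiv (PiP N)) (-1) = (\<Sum>j\<le>2*N. of_nat (Suc j) * coeff (PiP N) (Suc j) * (-1)^j)"
proof -
  have "degree (pderiv (PiP N)) \<le> 2*N"
    by (rule degree_le) (auto simp: coeff_pderiv coeff_Pi G_zero)
  then show ?thesis by (simp add: poly_le_sum coeff_pderiv)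
qed

lemma deriv_prod: "poly (pderiv (PiP N)) (-1) = X^N * (\<Prod>i\<in>{..<2*N+1}-{N}. X^N - X^i)"
proof -
  define A where "A = {..<2*N+1}"
  define f where "f i = [:X^N, X^i:]" for i
  have NA: "N \<in> A" "finite A" unfolding A_def by auto
  have "pderiv (PiP N) = (\<Sum>a\<in>A. prod f (A - {a}) * pderiv (f a))"
    unfolding PiP_def A_def f_def by (rule pderiv_prod)
  hence "poly (pderiv (PiP N)) (-1) = (\<Sum>a\<in>A. poly (prod f (A - {a}) * pderiv (f a)) (-1))"
    by (simp add: poly_sum)
  also have "\<dots> = poly (prod f (A - {N}) * pderiv (f N)) (-1)
       + (\<Sum>a\<in>A - {N}. poly (prod f (A - {a}) * pderiv (f a)) (-1))"
    using NA by (simp add: sum.remove)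
  also have "(\<Sum>a\<in>A - {N}. poly (prod f (A - {a}) * pderiv (f a)) (-1)) = 0"
  proof (rule sum.neutral, rule ballI)
    fix a assume a: "a \<in> A - {N}"
    have "poly (prod f (A - {a})) (-1) = (\<Prod>i\<in>A - {a}. poly (f i) (-1))" by (rule poly_prod)
    also have "\<dots> = 0"
      using a NA by (intro prod_zero) (auto simp: f_def intro!: bexI[of _ N])
    finally show "poly (prod f (A - {a}) * pderiv (f a)) (-1) = 0" by simp
  qed
  also have "poly (prod f (A - {N}) * pderiv (f N)) (-1) = X^N * (\<Prod>i\<in>A-{N}. X^N - X^i)"
    by (simp add: poly_prod f_def pderiv_pCons)
  finally show ?thesis unfolding A_def by simp
qed

lemma F_low: "(\<Prod>i<N. (X^N - X^i)) = (-1)^N * X ^ ch N * P N"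
proof (induction N)
  case 0 then show ?case by simp
next
  case (Suc N)
  have "(\<Prod>i<Suc N. (X^Suc N - X^i)) = (X^Suc N - X^0) * (\<Prod>i<N. X * (X^N - X^i))"
    by (subst prod.lessThan_Suc_shift) (simp add: algebra_simps)
  also have "\<dots> = (X^Suc N - 1) * (X^N * (\<Prod>i<N. (X^N - X^i)))"
    by (simp add: prod.distrib)
  also have "\<dots> = (-1)^Suc N * X ^ ch (Suc N) * P (Suc N)"
    unfolding Suc.IH by (simp add: P_Suc ch_Suc power_add algebra_simps)
  finally show ?case .
qed

lemma F_high: "(\<Prod>i\<in>{Suc N..2*N}. X^N - X^i) = X^(N*N) * P N"
proof -
  have "(\<Prod>i\<in>{Suc N..2*N}. X^N - X^i) = (\<Prod>i\<in>{1+N..N+N}. X^N - X^i)"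
    by (simp add: mult_2)
  also have "\<dots> = (\<Prod>i\<in>{1..N}. X^N - X^(i+N))"
    by (rule prod.shift_bounds_cl_nat_ivl)
  also have "\<dots> = (\<Prod>i\<in>{1..N}. X^N * (1 - X^i))"
    by (simp add: power_add algebra_simps)
  also have "\<dots> = X^(N*N) * P N"
    by (simp add: prod.distrib P_def power_mult)
  finally show ?thesis .
qed

lemma F_all: "(\<Prod>i\<in>{..<2*N+1}-{N}. X^N - X^i) = (-1)^N * X ^ (ch N + N*N) * (P N * P N)"
proof -
  have e: "{..<2*N+1}-{N} = {..<N} \<union> {Suc N..2*N}" by auto
  have "(\<Prod>i\<in>{..<2*N+1}-{N}. X^N - X^i) = (\<Prod>i<N. X^N - X^i) * (\<Prod>i\<in>{Suc N..2*N}. X^N - X^i)"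
    unfolding e by (rule prod.union_disjoint) auto
  then show ?thesis unfolding F_low F_high by (simp add: power_add algebra_simps)
qed


lemma fin_coeff:
  assumes "E = c + e" "e mod 3 \<noteq> 2" "m mod 3 = 2" "m \<le> N" "N \<le> e + d" "X ^ Suc d dvd H - 1"
  shows "(X ^ E * H) $ (c + m) = 0"
proof (cases "c + m < E")
  case True then show ?thesis by (simp add: fps_X_power_mult_nth)
next
  case False
  then have me: "e \<le> m" using assms(1) by simp
  have "m \<noteq> e" using assms(2,3) by auto
  then have k: "0 < m - e" "m - e \<le> d" using me assms(4,5) by auto
  obtain U where U: "H - 1 = X ^ Suc d * U" using assms(6) by (elim dvdE)
  have "(H - 1) $ (m - e) = 0" unfolding U fps_X_power_mult_nth using k by simp
  then have "H $ (m - e) = 0" using k by simp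
  then show ?thesis using False assms(1) by (simp add: fps_X_power_mult_nth)
qed


lemma term0:
  assumes "m \<le> N" "m mod 3 = 2" "j \<le> 2*N"
  shows "(X ^ (ch (Suc j) + N * (2*N+1 - Suc j)) * (G (2*N+1) (Suc j) * P N)) $ (N + ch N + N*N + m) = 0"
proof (cases "j < N")
  case True
  have gp: "G (2*N+1) (Suc j) * P (Suc j) * P (2*N+1 - Suc j) = P (2*N+1)"
    using True by (intro G_prod) simp
  have d: "X ^ Suc (Suc j) dvd G (2*N+1) (Suc j) * P N - 1"
    using True by (intro G_near1[OF gp]) auto
  show ?thesis
    using ch_ge[of "N - j"] True assms
    by (intro fin_coeff[OF E_lt[OF True] ch_mod assms(2,1) _ d]) simp
next
  case False
  have gp: "G (2*N+1) (Suc j) * P (2*N+1 - Suc j) * P (Suc j) = P (2*N+1)"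
    using G_prod[of "Suc j" "2*N+1"] assms by (simp add: ac_simps)
  have d: "X ^ Suc (2*N+1 - Suc j) dvd G (2*N+1) (Suc j) * P N - 1"
    using False assms by (intro G_near1[OF gp]) auto
  have ge: "N \<le> j" using False by simp
  show ?thesis
    using ch_ge[of "j - N + 1"] False assms
    by (intro fin_coeff[OF E_ge[OF ge assms(3)] ch_mod assms(2,1) _ d]) simp
qed


lemma neg_nth: "((-1::rat fps) ^ k * F) $ n = (-1) ^ k * F $ n"
  by (induction k) simp_all

lemma nat_nth: "(of_nat k * F :: rat fps) $ n = of_nat k * F $ n"
  by (simp flip: fps_of_nat)

lemma jac: assumes "m \<le> N" "m mod 3 = 2" shows "(P N ^ 3) $ m = 0"
proof -
  define c where "c = N + ch N + N*N"
  define T where "T j = of_nat (Suc j) * ((-1) ^ j *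
      (X ^ (ch (Suc j) + N * (2*N+1 - Suc j)) * (G (2*N+1) (Suc j) * P N)))" for j
  have L: "poly (pderiv (PiP N)) (-1) * P N = (-1)^N * (X ^ c * P N ^ 3)"
    unfolding deriv_prod F_all c_def by (simp add: power_add power3_eq_cube algebra_simps)
  have R: "poly (pderiv (PiP N)) (-1) * P N = (\<Sum>j\<le>2*N. T j)"
    unfolding deriv_sum sum_distrib_right T_def
    by (rule sum.cong[OF refl]) (simp only: coeff_Pi power_add mult_ac)
  have "(\<Sum>j\<le>2*N. T j) $ (c + m) = 0"
    unfolding fps_sum_nth T_def c_def nat_nth neg_nth using term0[OF assms] by simp
  then have "((-1)^N * (X ^ c * P N ^ 3)) $ (c + m) = 0" using L R by simp
  then show ?thesis unfolding neg_nth by (simp add: fps_X_power_mult_nth)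
qed

definition intg :: "rat fps \<Rightarrow> bool" where "intg A \<longleftrightarrow> (\<forall>k. A $ k \<in> \<int>)"
definition mdv :: "int \<Rightarrow> rat fps \<Rightarrow> bool" where
  "mdv m A \<longleftrightarrow> (\<exists>C. intg C \<and> A = fps_const (of_int m) * C)"
definition sparse :: "nat \<Rightarrow> rat fps \<Rightarrow> bool" where
  "sparse d A \<longleftrightarrow> (\<forall>k. \<not> d dvd k \<longrightarrow> A $ k = 0)"

lemma intg_add: "intg A \<Longrightarrow> intg B \<Longrightarrow> intg (A + B)" by (simp add: intg_def)
lemma intg_diff: "intg A \<Longrightarrow> intg B \<Longrightarrow> intg (A - B)" by (simp add: intg_def)
lemma intg_neg: "intg A \<Longrightarrow> intg (- A)" by (simp add: intg_def)
lemma intg_mult: "intg A \<Longrightarrow> intg B \<Longrightarrow> intg (A * B)"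
  unfolding intg_def fps_mult_nth by (auto intro!: Ints_sum Ints_mult)
lemma intg_1: "intg 1" by (simp add: intg_def)
lemma intg_Xp: "intg (X ^ k)" by (simp add: intg_def)
lemma intg_power: "intg A \<Longrightarrow> intg (A ^ k)"
  by (induction k) (simp_all add: intg_1 intg_mult)
lemma intg_prod: "(\<And>i. i \<in> S \<Longrightarrow> intg (f i)) \<Longrightarrow> intg (\<Prod>i\<in>S. f i)"
  by (induction S rule: infinite_finite_induct) (simp_all add: intg_1 intg_mult)
lemma intg_eta: "intg (eta_trunc r N)"
  unfolding eta_trunc_def by (intro intg_prod intg_diff intg_1 intg_Xp)

lemma sum_split_last: "(\<Sum>i=0..(k::nat). (f i :: rat)) = f k + (\<Sum>i\<in>{0..<k}. f i)"
proof -
  have "{0..k} = insert k {0..<k}" by auto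
  then show ?thesis by simp
qed

lemma quot_rec:
  fixes A B Q :: "rat fps"
  assumes "B $ 0 = 1" "Q * B = A"
  shows "Q $ k = A $ k - (\<Sum>i\<in>{0..<k}. Q $ i * B $ (k - i))"
proof -
  have "A $ k = (\<Sum>i=0..k. Q $ i * B $ (k - i))" using assms(2) fps_mult_nth by metis
  also have "\<dots> = Q $ k + (\<Sum>i\<in>{0..<k}. Q $ i * B $ (k - i))"
    by (simp add: sum_split_last assms(1))
  finally show ?thesis by simp
qed

lemma intg_quot:
  fixes A B Q :: "rat fps"
  assumes "intg A" "intg B" "B $ 0 = 1" "Q * B = A" shows "intg Q"
proof -
  have "Q $ k \<in> \<int>" for k
  proof (induction k rule: less_induct)
    case (less k)
    have "(\<Sum>i\<in>{0..<k}. Q $ i * B $ (k - i)) \<in> \<int>"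
      using less assms(2) by (intro Ints_sum Ints_mult) (auto simp: intg_def)
    then show ?case unfolding quot_rec[OF assms(3,4), of k] using assms(1) by (simp add: intg_def)
  qed
  then show ?thesis by (simp add: intg_def)
qed

lemma sparse_quot:
  fixes A B Q :: "rat fps"
  assumes "sparse d A" "sparse d B" "B $ 0 = 1" "Q * B = A" shows "sparse d Q"
proof -
  have "\<not> d dvd k \<longrightarrow> Q $ k = 0" for k
  proof (induction k rule: less_induct)
    case (less k)
    show ?case
    proof
      assume nd: "\<not> d dvd k"
      have "(\<Sum>i\<in>{0..<k}. Q $ i * B $ (k - i)) = 0"
      proof (rule sum.neutral, rule ballI)
        fix i assume i: "i \<in> {0..<k}"
        show "Q $ i * B $ (k - i) = 0"
        proof (cases "d dvd i")
          case True
          then have "\<not> d dvd (k - i)" using nd i by (metis atLeastLessThan_iff dvd_add le_add_diff_inverse less_imp_le)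
          then show ?thesis using assms(2) by (simp add: sparse_def)
        next
          case False then show ?thesis using less i by simp
        qed
      qed
      then show "Q $ k = 0" unfolding quot_rec[OF assms(3,4), of k] using assms(1) nd by (simp add: sparse_def)
    qed
  qed
  then show ?thesis by (simp add: sparse_def)
qed

lemma sparse_mult: "sparse d A \<Longrightarrow> sparse d B \<Longrightarrow> sparse d (A * B)"
proof -
  assume a: "sparse d A" "sparse d B"
  have "(A * B) $ k = 0" if nd: "\<not> d dvd k" for k
    unfolding fps_mult_nth
  proof (rule sum.neutral, rule ballI)
    fix i assume i: "i \<in> {0..k}"
    show "A $ i * B $ (k - i) = 0"
    proof (cases "d dvd i")
      case True
      then have "\<not> d dvd (k - i)" using nd i by (metis atLeastAtMost_iff dvd_add le_add_diff_inverse)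
      then show ?thesis using a(2) by (simp add: sparse_def)
    next
      case False then show ?thesis using a(1) by (simp add: sparse_def)
    qed
  qed
  then show ?thesis by (simp add: sparse_def)
qed

lemma sparse_1: "sparse d 1" by (simp add: sparse_def)
lemma sparse_prod: "(\<And>i. i \<in> S \<Longrightarrow> sparse d (f i)) \<Longrightarrow> sparse d (\<Prod>i\<in>S. f i)"
  by (induction S rule: infinite_finite_induct) (simp_all add: sparse_1 sparse_mult)
lemma sparse_power: "sparse d A \<Longrightarrow> sparse d (A ^ k)"
  by (induction k) (simp_all add: sparse_1 sparse_mult)
lemma sparse_factor: "d dvd r \<Longrightarrow> sparse d (1 - X ^ (r * i))"
proof -
  assume "d dvd r"
  then have "d dvd r * i" by simp
  then show ?thesis unfolding sparse_def by (metis dvd_0_right fps_X_power_nth fps_one_nth fps_sub_nth diff_zero)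
qed

lemma sparse_eta: "d dvd r \<Longrightarrow> sparse d (eta_trunc r N)"
  unfolding eta_trunc_def by (intro sparse_prod sparse_factor)

lemma prod_nth0: "(\<Prod>i\<in>S. f i :: rat fps) $ 0 = (\<Prod>i\<in>S. f i $ 0)"
  by (induction S rule: infinite_finite_induct) simp_all

lemma eta_0: "r > 0 \<Longrightarrow> eta_trunc r N $ 0 = 1"
proof -
  assume r: "r > 0"
  have "eta_trunc r N $ 0 = (\<Prod>i\<in>{1..N}. (1 - X ^ (r * i)) $ 0)"
    unfolding eta_trunc_def by (rule prod_nth0)
  also have "\<dots> = 1" using r by (intro prod.neutral) auto
  finally show ?thesis .
qed

definition cng :: "int \<Rightarrow> rat fps \<Rightarrow> rat fps \<Rightarrow> bool" where "cng m A B \<longleftrightarrow> mdv m (A - B)"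

lemma mdv_add: "mdv m A \<Longrightarrow> mdv m B \<Longrightarrow> mdv m (A + B)"
  unfolding mdv_def by (auto intro: intg_add simp: distrib_left)
lemma mdv_neg: "mdv m A \<Longrightarrow> mdv m (- A)"
  unfolding mdv_def by (auto intro: intg_neg)
lemma mdv_multR: "mdv m A \<Longrightarrow> intg B \<Longrightarrow> mdv m (A * B)"
proof -
  assume "mdv m A" "intg B"
  then obtain C where C: "intg C" "A = fps_const (of_int m) * C" unfolding mdv_def by blast
  then have "A * B = fps_const (of_int m) * (C * B)" by (simp add: mult.assoc)
  then show ?thesis unfolding mdv_def using C(1) \<open>intg B\<close> intg_mult by blast
qed
lemma mdv_multL: "mdv m A \<Longrightarrow> intg B \<Longrightarrow> mdv m (B * A)"
  using mdv_multR by (simp add: mult.commute)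

lemma cng_refl: "cng m A A" unfolding cng_def mdv_def by (auto intro: exI[of _ 0] simp: intg_def)
lemma cng_sym: "cng m A B \<Longrightarrow> cng m B A"
  unfolding cng_def using mdv_neg by fastforce
lemma cng_trans: "cng m A B \<Longrightarrow> cng m B C \<Longrightarrow> cng m A C"
  unfolding cng_def using mdv_add by fastforce
lemma cng_mult:
  assumes "cng m A A'" "cng m B B'" "intg B" "intg A'"
  shows "cng m (A * B) (A' * B')"
proof -
  have "A * B - A' * B' = (A - A') * B + A' * (B - B')" by (simp add: algebra_simps)
  then show ?thesis using assms unfolding cng_def by (simp add: mdv_add mdv_multR mdv_multL)
qed
lemma cng_power:
  assumes "cng m A A'" "intg A" "intg A'"
  shows "cng m (A ^ k) (A' ^ k)"
proof (induction k)
  case 0 then show ?case by (simp add: cng_refl)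
next
  case (Suc k)
  then show ?case using cng_mult[OF assms(1) Suc] assms by (simp add: intg_power)
qed
lemma cng_prod:
  assumes "\<And>i. i \<in> S \<Longrightarrow> cng m (f i) (g i)" "\<And>i. i \<in> S \<Longrightarrow> intg (f i)"
    "\<And>i. i \<in> S \<Longrightarrow> intg (g i)"
  shows "cng m (\<Prod>i\<in>S. f i) (\<Prod>i\<in>S. g i)"
  using assms
proof (induction S rule: infinite_finite_induct)
  case (insert x F)
  then show ?case by (simp add: cng_mult intg_prod)
qed (simp_all add: cng_refl)

lemma cng_div:
  assumes "cng m A A'" "cng m B B'" "intg A" "intg A'" "intg B" "intg B'" "B $ 0 = 1" "B' $ 0 = 1"
  shows "cng m (A / B) (A' / B')"
proof -
  define Q' where "Q' = A' / B'"
  have iB: "B * inverse B = 1" using assms(7) by (simp add: inverse_mult_eq_1')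
  have Q'B': "Q' * B' = A'" unfolding Q'_def using assms(8)
    by (simp add: fps_divide_unit mult.assoc inverse_mult_eq_1)
  have iQ': "intg Q'" by (rule intg_quot[OF assms(4,6,8) Q'B'])
  have iiB: "intg (inverse B)" by (rule intg_quot[OF intg_1 assms(5,7)]) (simp add: inverse_mult_eq_1 assms(7))
  have "A / B - Q' = (A - Q' * B) * inverse B"
    using assms(7) iB by (simp add: fps_divide_unit algebra_simps)
  also have "A - Q' * B = (A - A') + Q' * (- (B - B'))" using Q'B' by (simp add: algebra_simps)
  finally have e: "A / B - Q' = ((A - A') + Q' * (- (B - B'))) * inverse B" .
  have "mdv m (((A - A') + Q' * (- (B - B'))) * inverse B)"
    using assms(1,2) iQ' iiB unfolding cng_def by (intro mdv_multR mdv_add mdv_multL mdv_neg)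
  then show ?thesis unfolding cng_def e[folded Q'_def] Q'_def[symmetric] by (simp add: e)
qed

lemma frob3: "cng 3 (eta_trunc r N ^ 3) (eta_trunc (3 * r) N)"
proof -
  have "cng 3 (\<Prod>i\<in>{1..N}. (1 - X ^ (r * i)) ^ 3) (\<Prod>i\<in>{1..N}. 1 - X ^ (3 * r * i))"
  proof (rule cng_prod)
    fix i
    define Y where "Y = X ^ (r * i)"
    have y3: "X ^ (3 * r * i) = Y ^ 3" unfolding Y_def by (metis power_mult mult.commute mult.assoc)
    have c3: "fps_const (of_int 3) = (3 :: rat fps)" by (simp add: fps_numeral_fps_const)
    have "(1 - Y) ^ 3 - (1 - Y ^ 3) = 3 * (Y * Y - Y)" by (simp add: power3_eq_cube algebra_simps)
    then have "(1 - Y) ^ 3 - (1 - X ^ (3 * r * i)) = fps_const (of_int 3) * (Y * Y - Y)"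
      unfolding y3 c3 .
    moreover have "intg (Y * Y - Y)" unfolding Y_def by (intro intg_diff intg_mult intg_Xp)
    ultimately show "cng 3 ((1 - X ^ (r * i)) ^ 3) (1 - X ^ (3 * r * i))"
      unfolding cng_def mdv_def Y_def by blast
  qed (auto intro!: intg_power intg_diff intg_1 intg_Xp)
  then show ?thesis unfolding eta_trunc_def by (simp add: prod_power_distrib mult.assoc)
qed

lemma frob2: "cng 2 (eta_trunc r N ^ 2) (eta_trunc (2 * r) N)"
proof -
  have "cng 2 (\<Prod>i\<in>{1..N}. (1 - X ^ (r * i)) ^ 2) (\<Prod>i\<in>{1..N}. 1 - X ^ (2 * r * i))"
  proof (rule cng_prod)
    fix i
    define Y where "Y = X ^ (r * i)"
    have y2: "X ^ (2 * r * i) = Y ^ 2" unfolding Y_def by (metis power_mult mult.commute mult.assoc)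
    have c2: "fps_const (of_int 2) = (2 :: rat fps)" by (simp add: fps_numeral_fps_const)
    have "(1 - Y) ^ 2 - (1 - Y ^ 2) = 2 * (Y * Y - Y)" by (simp add: power2_eq_square algebra_simps)
    then have "(1 - Y) ^ 2 - (1 - X ^ (2 * r * i)) = fps_const (of_int 2) * (Y * Y - Y)"
      unfolding y2 c2 .
    moreover have "intg (Y * Y - Y)" unfolding Y_def by (intro intg_diff intg_mult intg_Xp)
    ultimately show "cng 2 ((1 - X ^ (r * i)) ^ 2) (1 - X ^ (2 * r * i))"
      unfolding cng_def mdv_def Y_def by blast
  qed (auto intro!: intg_power intg_diff intg_1 intg_Xp)
  then show ?thesis unfolding eta_trunc_def by (simp add: prod_power_distrib mult.assoc)
qed

lemma pow_nth0: "((F :: rat fps) ^ k) $ 0 = (F $ 0) ^ k"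
  by (induction k) simp_all

lemma div_mult_cancel: "(B :: rat fps) $ 0 = 1 \<Longrightarrow> (A / B) * B = A"
  by (simp add: fps_divide_unit mult.assoc inverse_mult_eq_1)

lemma cng_nth: "cng m A B \<Longrightarrow> \<exists>c. A $ k = of_int m * c + B $ k \<and> c \<in> \<int>"
  unfolding cng_def mdv_def intg_def
  by (metis add_diff_cancel_right' diff_add_cancel fps_mult_left_const_nth fps_sub_nth)

theorem mainTheorem17:
  fixes t n :: nat
  assumes "odd t"
  shows "\<exists>c::int. b_col 3 2 (3 * t) (3 * n + 2) = of_int (6 * c)"
proof -
  define N where "N = 3 * n + 2"
  define E where "E r = eta_trunc r N" for r
  have tp: "t > 0" using assms by (cases t) auto
  have iE: "intg (E r)" for r unfolding E_def by (rule intg_eta)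
  have E0: "r > 0 \<Longrightarrow> E r $ 0 = 1" for r unfolding E_def by (rule eta_0)
  define A where "A = E 2 ^ 3 * E (3 * t) ^ 3"
  define B where "B = E 1 ^ 3 * E (2 * (3 * t)) ^ 3"
  have Q: "b_col 3 2 (3 * t) (3 * n + 2) = (A / B) $ N"
    unfolding b_col_def A_def B_def E_def N_def by simp
  have iA: "intg A" unfolding A_def by (intro intg_mult intg_power iE)
  have iB: "intg B" unfolding B_def by (intro intg_mult intg_power iE)
  have B0: "B $ 0 = 1" unfolding B_def using tp by (simp add: E0 pow_nth0)
  define A3 where "A3 = E (3 * 2) * E (3 * (3 * t))"
  define B3 where "B3 = E (3 * 1) * E (3 * (2 * (3 * t)))"
  have iA3: "intg A3" unfolding A3_def by (intro intg_mult iE)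
  have iB3: "intg B3" unfolding B3_def by (intro intg_mult iE)
  have B30: "B3 $ 0 = 1" unfolding B3_def using tp by (simp add: E0 pow_nth0)
  have cA3: "cng 3 A A3" unfolding A_def A3_def E_def
    by (intro cng_mult frob3 intg_eta intg_power)
  have cB3: "cng 3 B B3" unfolding B_def B3_def E_def
    by (intro cng_mult frob3 intg_eta intg_power)
  have c3: "cng 3 (A / B) (A3 / B3)" by (rule cng_div[OF cA3 cB3 iA iA3 iB iB3 B0 B30])
  have sp3: "sparse 3 (A3 / B3)"
    by (rule sparse_quot[OF _ _ B30 div_mult_cancel[OF B30]])
       (unfold A3_def B3_def E_def, (intro sparse_mult sparse_eta; simp)+)
  have "\<not> 3 dvd N" unfolding N_def by presburger
  then have z3: "(A3 / B3) $ N = 0" using sp3 by (simp add: sparse_def)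
  obtain a where a: "(A / B) $ N = of_int 3 * a" "a \<in> \<int>" using cng_nth[OF c3, of N] z3 by auto
  define A2 where "A2 = (E 1 ^ 2) ^ 3 * E (3 * t) ^ 3"
  define B2 where "B2 = E 1 ^ 3 * (E (3 * t) ^ 2) ^ 3"
  have iA2: "intg A2" unfolding A2_def by (intro intg_mult intg_power iE)
  have iB2: "intg B2" unfolding B2_def by (intro intg_mult intg_power iE)
  have B20: "B2 $ 0 = 1" unfolding B2_def using tp by (simp add: E0 pow_nth0)
  have e2: "cng 2 (E 2) (E 1 ^ 2)" using frob2[of 1 N] unfolding E_def by (simp add: cng_sym)
  have e6: "cng 2 (E (2 * (3 * t))) (E (3 * t) ^ 2)" using frob2[of "3 * t" N] unfolding E_def by (simp add: cng_sym)
  have cA2: "cng 2 A A2" unfolding A_def A2_def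
    by (intro cng_mult cng_power e2 cng_refl iE intg_power)
  have cB2: "cng 2 B B2" unfolding B_def B2_def
    by (intro cng_mult cng_power e6 cng_refl iE intg_power)
  have c2: "cng 2 (A / B) (A2 / B2)" by (rule cng_div[OF cA2 cB2 iA iA2 iB iB2 B0 B20])
  define W where "W = inverse (E (3 * t) ^ 3)"
  have K0: "E (3 * t) ^ 3 $ 0 = 1" using tp by (simp add: E0 pow_nth0)
  have WK: "W * E (3 * t) ^ 3 = 1" unfolding W_def using K0 by (simp add: inverse_mult_eq_1)
  have spW: "sparse 3 W"
    by (rule sparse_quot[OF sparse_1 _ K0 WK]) (unfold E_def, intro sparse_power sparse_eta, simp)
  have "(E 1 ^ 3 * W) * B2 = A2"
  proof -
    have "(E 1 ^ 3 * W) * B2 = E 1 ^ 3 * E 1 ^ 3 * E (3 * t) ^ 3 * (W * E (3 * t) ^ 3)"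
      unfolding B2_def by (simp add: power_mult[symmetric] algebra_simps)
    also have "\<dots> = A2" unfolding WK A2_def by (simp add: power_mult[symmetric] algebra_simps)
    finally show ?thesis .
  qed
  moreover have "(A2 / B2) * B2 = A2" by (rule div_mult_cancel[OF B20])
  moreover have "B2 \<noteq> 0" using B20 by auto
  ultimately have q2: "A2 / B2 = E 1 ^ 3 * W" by (metis mult_right_cancel)
  have z2: "(A2 / B2) $ N = 0"
    unfolding q2 fps_mult_nth
  proof (rule sum.neutral, rule ballI)
    fix i assume i: "i \<in> {0..N}"
    show "(E 1 ^ 3) $ i * W $ (N - i) = 0"
    proof (cases "i mod 3 = 2")
      case True
      then show ?thesis using jac[of i N] i unfolding E_def eta1 by simp
    next
      case False
      then have "\<not> 3 dvd (N - i)" using i unfolding N_def by auto presburger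
      then show ?thesis using spW by (simp add: sparse_def)
    qed
  qed
  obtain b where b: "(A / B) $ N = of_int 2 * b" "b \<in> \<int>" using cng_nth[OF c2, of N] z2 by auto
  obtain a' where a': "a = of_int a'" using a(2) Ints_cases by blast
  obtain b' where b': "b = of_int b'" using b(2) Ints_cases by blast
  have "of_int (3 * a') = (of_int (2 * b') :: rat)" using a(1) b(1) a' b' by simp
  then have "3 * a' = 2 * b'" by linarith
  then have "even a'" by presburger
  then obtain c where "a' = 2 * c" by (elim evenE)
  then have "(A / B) $ N = of_int (6 * c)" using a(1) a' by simp
  then show ?thesis unfolding Q by blast
qed

end
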